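(* Let $G$ be a graph with minimum degree $\delta(G)$, and let $m$ be a positive integer with $m > \frac{\chi_\rho(G)}{\delta(G)}$ (so in particular $\delta(G)\ge 1$). Then $\chi_\rho(FSSD_m(G)) = \chi_\rho(FSSD_{m+1}(G))$.
   Context: All graphs are finite and simple. For a positive integer $i$, an $i$-packing in a graph is a set of vertices any two distinct members of which are at distance greater than $i$. The packing chromatic number $\chi_\rho(H)$ of a graph $H$ is the smallest integer $k$ such that $V(H)$ can be partitioned into sets $V_1,\dots,V_k$ with each $V_i$ an $i$-packing. For a positive integer $m$, $FSSD_m(G)$ is obtained from $G$ by replacing each edge $uv$ of $G$ by a copy of $K_{2,m}$: the edge $uv$ is deleted and $m$ new vertices are added, each adjacent to exactly $u$ and $v$. *)

theory Defs
  imports Main "HOL-Library.Extended_Nat"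
begin

definition simple_graph :: "'a set \<Rightarrow> 'a set set \<Rightarrow> bool" where
  "simple_graph V E \<longleftrightarrow> finite V \<and>
     (\<forall>e\<in>E. \<exists>u v. e = {u, v} \<and> u \<noteq> v \<and> u \<in> V \<and> v \<in> V)"

definition degree :: "'a set set \<Rightarrow> 'a \<Rightarrow> nat" where
  "degree E v = card {e \<in> E. v \<in> e}"

definition min_degree :: "'a set \<Rightarrow> 'a set set \<Rightarrow> nat" where
  "min_degree V E = Min (degree E ` V)"

fun is_walk :: "'a set \<Rightarrow> 'a set set \<Rightarrow> 'a list \<Rightarrow> bool" where
  "is_walk V E [] = False"
| "is_walk V E [x] = (x \<in> V)"
| "is_walk V E (x # y # xs) = (x \<in> V \<and> {x, y} \<in> E \<and> is_walk V E (y # xs))"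

text \<open>Graph distance (infinite if no walk exists).\<close>

definition gdist :: "'a set \<Rightarrow> 'a set set \<Rightarrow> 'a \<Rightarrow> 'a \<Rightarrow> enat" where
  "gdist V E u v = (INF xs \<in> {xs. is_walk V E xs \<and> hd xs = u \<and> last xs = v}.
                      enat (length xs - 1))"

definition is_packing :: "'a set \<Rightarrow> 'a set set \<Rightarrow> nat \<Rightarrow> 'a set \<Rightarrow> bool" where
  "is_packing V E i S \<longleftrightarrow> S \<subseteq> V \<and>
     (\<forall>u\<in>S. \<forall>v\<in>S. u \<noteq> v \<longrightarrow> gdist V E u v > enat i)"

text \<open>A packing k-colouring: a partition of V into V_1,...,V_k (classes may be empty)
  with V_i an i-packing, encoded by the colour map f.\<close>

definition packing_colouring :: "'a set \<Rightarrow> 'a set set \<Rightarrow> nat \<Rightarrow> ('a \<Rightarrow> nat) \<Rightarrow> bool" where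
  "packing_colouring V E k f \<longleftrightarrow> (\<forall>v\<in>V. f v \<in> {1..k}) \<and>
     (\<forall>i\<in>{1..k}. is_packing V E i {v \<in> V. f v = i})"

definition packing_chromatic_number :: "'a set \<Rightarrow> 'a set set \<Rightarrow> nat" where
  "packing_chromatic_number V E = (LEAST k. \<exists>f. packing_colouring V E k f)"

text \<open>FSSD_m(G): each edge e = uv is replaced by m new vertices Sub e 0, ..., Sub e (m-1),
  each adjacent exactly to u and v.\<close>

datatype 'a fssd_vertex = Orig 'a | Sub "'a set" nat

definition fssd_V :: "nat \<Rightarrow> 'a set \<Rightarrow> 'a set set \<Rightarrow> 'a fssd_vertex set" where
  "fssd_V m V E = Orig ` V \<union> {Sub e i | e i. e \<in> E \<and> i < m}"

definition fssd_E :: "nat \<Rightarrow> 'a set \<Rightarrow> 'a set set \<Rightarrow> 'a fssd_vertex set set" where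
  "fssd_E m V E = {{Orig u, Sub e i} | u e i. e \<in> E \<and> u \<in> e \<and> i < m}"

end

theory Submission
  imports Defs
begin

lemma fV_Orig[simp]: "Orig u \<in> fssd_V n V E \<longleftrightarrow> u \<in> V"
  unfolding fssd_V_def by auto
lemma fV_Sub[simp]: "Sub e i \<in> fssd_V n V E \<longleftrightarrow> e \<in> E \<and> i < n"
  unfolding fssd_V_def by auto
lemma fE_OS[simp]: "{Orig u, Sub e i} \<in> fssd_E n V E \<longleftrightarrow> e \<in> E \<and> u \<in> e \<and> i < n"
  unfolding fssd_E_def by (auto simp: doubleton_eq_iff)
lemma fE_SO[simp]: "{Sub e i, Orig u} \<in> fssd_E n V E \<longleftrightarrow> e \<in> E \<and> u \<in> e \<and> i < n"
  by (metis fE_OS insert_commute)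
lemma fE_OO[simp]: "{Orig u, Orig w} \<notin> fssd_E n V E"
  unfolding fssd_E_def by (auto simp: doubleton_eq_iff)
lemma fE_SS[simp]: "{Sub e i, Sub f j} \<notin> fssd_E n V E"
  unfolding fssd_E_def by (auto simp: doubleton_eq_iff)

lemma walk_nonempty: "is_walk V E xs \<Longrightarrow> xs \<noteq> []"
  by (cases xs) auto

lemma walk_in_V: "is_walk V E xs \<Longrightarrow> x \<in> set xs \<Longrightarrow> x \<in> V"
  by (induction V E xs rule: is_walk.induct) auto

lemma walk_mono: "V \<subseteq> V' \<Longrightarrow> E \<subseteq> E' \<Longrightarrow> is_walk V E xs \<Longrightarrow> is_walk V' E' xs"
  by (induction V E xs rule: is_walk.induct) auto

lemma walk_map:
  assumes "\<And>x. x \<in> V \<Longrightarrow> h x \<in> V'" "\<And>x y. {x, y} \<in> E \<Longrightarrow> {h x, h y} \<in> E'"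
  shows "is_walk V E xs \<Longrightarrow> is_walk V' E' (map h xs)"
  by (induction xs rule: induct_list012) (auto simp: assms)

lemma gdist_gt:
  "enat i < gdist V E u v \<longleftrightarrow>
     (\<forall>xs. is_walk V E xs \<and> hd xs = u \<and> last xs = v \<longrightarrow> i < length xs - 1)"
proof
  assume a: "enat i < gdist V E u v"
  show "\<forall>xs. is_walk V E xs \<and> hd xs = u \<and> last xs = v \<longrightarrow> i < length xs - 1"
  proof (intro allI impI)
    fix xs assume "is_walk V E xs \<and> hd xs = u \<and> last xs = v"
    then have "gdist V E u v \<le> enat (length xs - 1)"
      unfolding gdist_def by (intro INF_lower) auto
    with a have "enat i < enat (length xs - 1)" by (rule less_le_trans)
    then show "i < length xs - 1" by simp
  qed
next
  assume a: "\<forall>xs. is_walk V E xs \<and> hd xs = u \<and> last xs = v \<longrightarrow> i < length xs - 1"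
  have "enat (Suc i) \<le> gdist V E u v"
    unfolding gdist_def using a by (intro INF_greatest) (auto simp: Suc_le_eq)
  then show "enat i < gdist V E u v"
    by (meson enat_ord_simps(2) lessI less_le_trans)
qed

lemma packing_colouring_iff:
  "packing_colouring V E k f \<longleftrightarrow> (\<forall>v\<in>V. f v \<in> {1..k}) \<and>
    (\<forall>u\<in>V. \<forall>v\<in>V. u \<noteq> v \<longrightarrow> f u = f v \<longrightarrow>
       (\<forall>xs. is_walk V E xs \<and> hd xs = u \<and> last xs = v \<longrightarrow> f u < length xs - 1))"
  (is "?L \<longleftrightarrow> ?A \<and> ?B")
proof
  assume L: ?L
  then have A: ?A unfolding packing_colouring_def by blast
  have ?B
  proof (intro ballI impI allI)
    fix u v xs assume u: "u \<in> V" and v: "v \<in> V" and ne: "u \<noteq> v" and eq: "f u = f v"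
      and w: "is_walk V E xs \<and> hd xs = u \<and> last xs = v"
    have fu: "f u \<in> {1..k}" using A u by blast
    then have "is_packing V E (f u) {x \<in> V. f x = f u}" using L unfolding packing_colouring_def by blast
    then have "enat (f u) < gdist V E u v" unfolding is_packing_def using u v ne eq by auto
    then show "f u < length xs - 1" using w unfolding gdist_gt by blast
  qed
  with A show "?A \<and> ?B" ..
next
  assume R: "?A \<and> ?B"
  show ?L unfolding packing_colouring_def
  proof (intro conjI ballI)
    fix v assume "v \<in> V" then show "f v \<in> {1..k}" using R by blast
  next
    fix i assume "i \<in> {1..k}"
    show "is_packing V E i {v \<in> V. f v = i}" unfolding is_packing_def gdist_gt
      using R by (auto 0 0) (metis (no_types))
  qed
qed


lemma fE_cases:
  assumes "{x, y} \<in> fssd_E n V E"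
  obtains u e i where "e \<in> E" "u \<in> e" "i < n"
    "(x = Orig u \<and> y = Sub e i) \<or> (x = Sub e i \<and> y = Orig u)"
  using assms unfolding fssd_E_def by (auto simp: doubleton_eq_iff)

lemma project_walk:
  assumes G: "simple_graph V E"
  shows "is_walk (fssd_V n V E) (fssd_E n V E) xs \<Longrightarrow> hd xs = Orig u \<Longrightarrow> last xs = Orig v \<Longrightarrow>
    \<exists>ys. is_walk V E ys \<and> hd ys = u \<and> last ys = v \<and> 2 * (length ys - 1) \<le> length xs - 1"
proof (induction "length xs" arbitrary: xs u rule: less_induct)
  case less
  show ?case
  proof (cases xs)
    case Nil then show ?thesis using less by simp
  next
    case (Cons x r)
    show ?thesis
    proof (cases r)
      case Nil
      then show ?thesis using less Cons by (intro exI[of _ "[u]"]) auto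
    next
      case (Cons y r2)
      have x: "x = Orig u" using less \<open>xs = x # r\<close> by simp
      have e1: "{Orig u, y} \<in> fssd_E n V E" using less.prems \<open>xs = x # r\<close> Cons x by simp
      then obtain e i where y: "y = Sub e i" and ee: "e \<in> E" "u \<in> e" "i < n"
        by (rule fE_cases) auto
      have r2: "r2 \<noteq> []" using less.prems \<open>xs = x # r\<close> Cons y by auto
      then obtain z r3 where r2eq: "r2 = z # r3" by (cases r2) auto
      have e2: "{Sub e i, z} \<in> fssd_E n V E" using less.prems \<open>xs = x # r\<close> Cons y r2eq by simp
      then obtain w where z: "z = Orig w" and we: "w \<in> e"
        by (rule fE_cases) auto
      have wr: "is_walk (fssd_V n V E) (fssd_E n V E) r2"
        using less.prems \<open>xs = x # r\<close> Cons r2eq by simp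
      have "last r2 = Orig v" using less.prems \<open>xs = x # r\<close> Cons r2 by simp
      then obtain ys where ys: "is_walk V E ys" "hd ys = w" "last ys = v"
        "2 * (length ys - 1) \<le> length r2 - 1"
        using less.hyps[of r2 w] wr r2eq z \<open>xs = x # r\<close> Cons by auto
      have lx: "length xs - 1 = length r2 + 1" using \<open>xs = x # r\<close> Cons by simp
      show ?thesis
      proof (cases "u = w")
        case True
        then show ?thesis using ys lx by (intro exI[of _ ys]) auto
      next
        case False
        obtain a b where ab: "e = {a, b}" "a \<noteq> b" "a \<in> V" "b \<in> V"
          using G ee unfolding simple_graph_def by blast
        have euw: "e = {u, w}" using ab ee we False by auto
        have uV: "u \<in> V" using ab ee by auto
        obtain t where yst: "ys = w # t" using ys walk_nonempty by (cases ys) auto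
        have "is_walk V E (u # ys)" using yst ys uV ee euw by simp
        moreover have "2 * (length (u # ys) - 1) \<le> length xs - 1"
          using ys lx yst r2eq by simp
        ultimately show ?thesis using ys yst by (intro exI[of _ "u # ys"]) auto
      qed
    qed
  qed
qed


lemma walk_len2: "is_walk V E xs \<Longrightarrow> hd xs \<noteq> last xs \<Longrightarrow> length xs - 1 \<le> 1 \<Longrightarrow>
   xs = [hd xs, last xs] \<and> {hd xs, last xs} \<in> E"
  by (cases xs rule: remdups_adj.cases) auto

lemma recolour:
  assumes k: "k \<ge> 1"
    and sub: "\<And>e i. g (Sub e i) = 1"
    and orig: "\<And>v. v \<in> V \<Longrightarrow> g (Orig v) \<in> {2..k}"
    and walks: "\<And>u v xs. u \<in> V \<Longrightarrow> v \<in> V \<Longrightarrow> u \<noteq> v \<Longrightarrow> g (Orig u) = g (Orig v) \<Longrightarrow>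
        is_walk (fssd_V n V E) (fssd_E n V E) xs \<Longrightarrow> hd xs = Orig u \<Longrightarrow> last xs = Orig v \<Longrightarrow>
        g (Orig u) < length xs - 1"
  shows "packing_colouring (fssd_V n V E) (fssd_E n V E) k g"
  unfolding packing_colouring_iff
proof (intro conjI ballI impI allI)
  fix x assume "x \<in> fssd_V n V E"
  then show "g x \<in> {1..k}" using k sub orig by (cases x) force+
next
  fix x y xs assume x: "x \<in> fssd_V n V E" and y: "y \<in> fssd_V n V E" and ne: "x \<noteq> y"
    and eq: "g x = g y" and w: "is_walk (fssd_V n V E) (fssd_E n V E) xs \<and> hd xs = x \<and> last xs = y"
  show "g x < length xs - 1"
  proof (cases x)
    case (Orig u)
    then have u: "u \<in> V" using x by simp
    show ?thesis
    proof (cases y)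
      case (Orig v)
      then show ?thesis using walks[of u v xs] u x y ne eq w \<open>x = Orig u\<close> by auto
    next
      case (Sub e i)
      then show ?thesis using eq orig[OF u] sub \<open>x = Orig u\<close> by auto
    qed
  next
    case (Sub e i)
    show ?thesis
    proof (cases y)
      case (Orig v)
      then have "v \<in> V" using y by simp
      then show ?thesis using orig[of v] eq sub \<open>x = Sub e i\<close> \<open>y = Orig v\<close> by auto
    next
      case (Sub f j)
      show ?thesis
      proof (rule ccontr)
        assume "\<not> g x < length xs - 1"
        then have "length xs - 1 \<le> 1" using sub \<open>x = Sub e i\<close> by simp
        then have "{x, y} \<in> fssd_E n V E" using walk_len2[of _ _ xs] w ne by auto
        then show False using \<open>x = Sub e i\<close> \<open>y = Sub f j\<close> by simp
      qed
    qed
  qed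
qed

lemma finite_E: "simple_graph V E \<Longrightarrow> finite E"
proof -
  assume G: "simple_graph V E"
  then have "E \<subseteq> Pow V" unfolding simple_graph_def by fastforce
  moreover have "finite V" using G unfolding simple_graph_def by blast
  ultimately show "finite E" by (meson finite_Pow_iff finite_subset)
qed

lemma orig_not_one:
  assumes G: "simple_graph V E"
    and f: "packing_colouring (fssd_V n V E) (fssd_E n V E) k f"
    and v: "v \<in> V" and f1: "f (Orig v) = 1"
  shows "n * degree E v \<le> k - 1"
proof -
  let ?W = "fssd_V n V E" and ?F = "fssd_E n V E"
  define N where "N = (\<lambda>(e, i). Sub e i) ` ({e \<in> E. v \<in> e} \<times> {..<n})"
  have fin: "finite {e \<in> E. v \<in> e}" using finite_E[OF G] by simp
  have "card N = card ({e \<in> E. v \<in> e} \<times> {..<n})"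
    unfolding N_def by (rule card_image) (auto simp: inj_on_def)
  also have "\<dots> = degree E v * n" unfolding degree_def by (simp add: card_cartesian_product)
  finally have cN: "card N = n * degree E v" by simp
  have fP: "\<forall>x\<in>?W. f x \<in> {1..k}" and fW: "\<forall>u\<in>?W. \<forall>w\<in>?W. u \<noteq> w \<longrightarrow> f u = f w \<longrightarrow>
       (\<forall>xs. is_walk ?W ?F xs \<and> hd xs = u \<and> last xs = w \<longrightarrow> f u < length xs - 1)"
    using conjunct1[OF f[unfolded packing_colouring_iff]] conjunct2[OF f[unfolded packing_colouring_iff]]
    by blast+
  have fW': "\<And>u w xs. u \<in> ?W \<Longrightarrow> w \<in> ?W \<Longrightarrow> u \<noteq> w \<Longrightarrow> f u = f w \<Longrightarrow>
     is_walk ?W ?F xs \<Longrightarrow> hd xs = u \<Longrightarrow> last xs = w \<Longrightarrow> f u < length xs - 1"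
    using fW by blast
  have NW: "\<And>a. a \<in> N \<Longrightarrow> a \<in> ?W \<and> {Orig v, a} \<in> ?F \<and> {a, Orig v} \<in> ?F"
    unfolding N_def by auto
  have vW: "Orig v \<in> ?W" using v by simp
  have range: "f ` N \<subseteq> {2..k}"
  proof
    fix c assume "c \<in> f ` N"
    then obtain a where a: "a \<in> N" "c = f a" by blast
    have "f a \<noteq> 1"
    proof
      assume "f a = 1"
      moreover have "is_walk ?W ?F [Orig v, a]" using NW[OF a(1)] vW by simp
      moreover have "Orig v \<noteq> a" using a(1) unfolding N_def by auto
      ultimately have "f (Orig v) < length [Orig v, a] - 1"
        using fW'[of "Orig v" a "[Orig v, a]"] vW NW[OF a(1)] f1 by simp
      then show False using f1 by simp
    qed
    moreover have "f a \<in> {1..k}" using fP NW[OF a(1)] by blast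
    ultimately show "c \<in> {2..k}" using a(2) by auto
  qed
  have inj: "inj_on f N"
  proof
    fix a b assume a: "a \<in> N" and b: "b \<in> N" and eq: "f a = f b"
    show "a = b"
    proof (rule ccontr)
      assume ne: "a \<noteq> b"
      have "is_walk ?W ?F [a, Orig v, b]" using NW[OF a] NW[OF b] vW by simp
      then have "f a < length [a, Orig v, b] - 1" using fW'[of a b "[a, Orig v, b]"] NW[OF a] NW[OF b] ne eq by simp
      then have "f a < 2" by simp
      then show False using range a by force
    qed
  qed
  have "card N = card (f ` N)" using inj by (simp add: card_image)
  also have "\<dots> \<le> card {2..k}" using range by (intro card_mono) auto
  finally show ?thesis using cN by simp
qed


lemma chi_exists:
  assumes G: "simple_graph V E"
  shows "\<exists>c. packing_colouring V E (packing_chromatic_number V E) c"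
proof -
  have "finite V" using G unfolding simple_graph_def by blast
  then obtain h where h: "bij_betw h V {0..<card V}" using ex_bij_betw_finite_nat by blast
  have "packing_colouring V E (card V) (\<lambda>v. h v + 1)"
    unfolding packing_colouring_iff
  proof (intro conjI ballI impI allI)
    fix v assume "v \<in> V" then show "h v + 1 \<in> {1..card V}"
      using h bij_betw_apply by fastforce
  next
    fix u v xs assume "u \<in> V" "v \<in> V" "u \<noteq> v" "h u + 1 = h v + 1"
    then have False using h unfolding bij_betw_def inj_on_def by auto
    then show "h u + 1 < length xs - 1" ..
  qed
  then have "\<exists>k c. packing_colouring V E k c" by blast
  then show ?thesis unfolding packing_chromatic_number_def
    by (rule LeastI_ex)
qed

lemma good_colouring:
  assumes G: "simple_graph V E"
    and K: "packing_chromatic_number V E < n * min_degree V E"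
  shows "\<exists>f. packing_colouring (fssd_V n V E) (fssd_E n V E)
             (packing_chromatic_number (fssd_V n V E) (fssd_E n V E)) f \<and>
           (\<forall>v\<in>V. f (Orig v) \<in> {2..packing_chromatic_number (fssd_V n V E) (fssd_E n V E)})"
proof -
  let ?K = "packing_chromatic_number V E"
  let ?X = "packing_chromatic_number (fssd_V n V E) (fssd_E n V E)"
  obtain c where c: "packing_colouring V E ?K c" using chi_exists[OF G] by blast
  have cP: "\<And>v. v \<in> V \<Longrightarrow> c v \<in> {1..?K}" using c unfolding packing_colouring_iff by blast
  have cW: "\<And>u v xs. u \<in> V \<Longrightarrow> v \<in> V \<Longrightarrow> u \<noteq> v \<Longrightarrow> c u = c v \<Longrightarrow>
     is_walk V E xs \<Longrightarrow> hd xs = u \<Longrightarrow> last xs = v \<Longrightarrow> c u < length xs - 1"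
    using c unfolding packing_colouring_iff by blast
  define g where "g x = (case x of Orig v \<Rightarrow> c v + 1 | Sub e i \<Rightarrow> 1)" for x
  have "packing_colouring (fssd_V n V E) (fssd_E n V E) (?K + 1) g"
  proof (rule recolour)
    show "\<And>e i. g (Sub e i) = 1" unfolding g_def by simp
    show "\<And>v. v \<in> V \<Longrightarrow> g (Orig v) \<in> {2..?K + 1}" unfolding g_def using cP by force
  next
    fix u v xs assume u: "u \<in> V" and v: "v \<in> V" and ne: "u \<noteq> v" and eq: "g (Orig u) = g (Orig v)"
      and w: "is_walk (fssd_V n V E) (fssd_E n V E) xs" "hd xs = Orig u" "last xs = Orig v"
    obtain ys where ys: "is_walk V E ys" "hd ys = u" "last ys = v" "2 * (length ys - 1) \<le> length xs - 1"
      using project_walk[OF G w] by blast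
    have "c u < length ys - 1" using cW[OF u v ne _ ys(1-3)] eq unfolding g_def by simp
    moreover have "c u \<ge> 1" using cP[OF u] by simp
    ultimately show "g (Orig u) < length xs - 1" using ys(4) unfolding g_def by simp
  qed simp
  then have ex1: "\<exists>f. packing_colouring (fssd_V n V E) (fssd_E n V E) (?K + 1) f" by blast
  then have le: "?X \<le> ?K + 1" unfolding packing_chromatic_number_def
    by (rule Least_le)
  from ex1 have "\<exists>k f. packing_colouring (fssd_V n V E) (fssd_E n V E) k f" by blast
  then have "\<exists>f. packing_colouring (fssd_V n V E) (fssd_E n V E) ?X f"
    unfolding packing_chromatic_number_def by (rule LeastI_ex)
  then obtain f where f: "packing_colouring (fssd_V n V E) (fssd_E n V E) ?X f" by blast
  have "\<forall>v\<in>V. f (Orig v) \<in> {2..?X}"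
  proof
    fix v assume v: "v \<in> V"
    have f1: "f (Orig v) \<in> {1..?X}" using f v unfolding packing_colouring_iff by simp
    have "f (Orig v) \<noteq> 1"
    proof
      assume "f (Orig v) = 1"
      then have a: "n * degree E v \<le> ?X - 1" using orig_not_one[OF G f v] by blast
      have "finite V" using G unfolding simple_graph_def by (elim conjE)
      then have "min_degree V E \<le> degree E v" unfolding min_degree_def using v by simp
      then have "n * min_degree V E \<le> n * degree E v" by simp
      with a le K show False by linarith
    qed
    with f1 show "f (Orig v) \<in> {2..?X}" by auto
  qed
  with f show ?thesis by blast
qed

lemma transfer:
  assumes f: "packing_colouring (fssd_V a V E) (fssd_E a V E) k f"
    and fo: "\<forall>v\<in>V. f (Orig v) \<in> {2..k}"
    and V: "V \<noteq> {}"
    and tr: "\<And>u v xs. u \<in> V \<Longrightarrow> v \<in> V \<Longrightarrow> is_walk (fssd_V b V E) (fssd_E b V E) xs \<Longrightarrow>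
       hd xs = Orig u \<Longrightarrow> last xs = Orig v \<Longrightarrow>
       \<exists>ys. is_walk (fssd_V a V E) (fssd_E a V E) ys \<and> hd ys = Orig u \<and> last ys = Orig v \<and>
            length ys \<le> length xs"
  shows "packing_colouring (fssd_V b V E) (fssd_E b V E) k
           (\<lambda>x. case x of Orig v \<Rightarrow> f (Orig v) | Sub e i \<Rightarrow> 1)"
proof (rule recolour)
  obtain v where "v \<in> V" using V by blast
  then show "1 \<le> k" using fo by force
  have fW: "\<And>u w xs. u \<in> fssd_V a V E \<Longrightarrow> w \<in> fssd_V a V E \<Longrightarrow> u \<noteq> w \<Longrightarrow> f u = f w \<Longrightarrow>
     is_walk (fssd_V a V E) (fssd_E a V E) xs \<Longrightarrow> hd xs = u \<Longrightarrow> last xs = w \<Longrightarrow> f u < length xs - 1"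
    using f unfolding packing_colouring_iff by blast
  fix u v xs assume u: "u \<in> V" and v: "v \<in> V" and ne: "u \<noteq> v"
    and eq: "(case Orig u of Orig v \<Rightarrow> f (Orig v) | Sub e i \<Rightarrow> 1) = (case Orig v of Orig v \<Rightarrow> f (Orig v) | Sub e i \<Rightarrow> 1)"
    and w: "is_walk (fssd_V b V E) (fssd_E b V E) xs" "hd xs = Orig u" "last xs = Orig v"
  obtain ys where ys: "is_walk (fssd_V a V E) (fssd_E a V E) ys" "hd ys = Orig u" "last ys = Orig v"
     "length ys \<le> length xs" using tr[OF u v w] by blast
  have "f (Orig u) < length ys - 1" using fW[of "Orig u" "Orig v" ys] u v ne eq ys by simp
  then show "(case Orig u of Orig v \<Rightarrow> f (Orig v) | Sub e i \<Rightarrow> 1) < length xs - 1" using ys(4) by simp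
qed (use fo in auto)


theorem proposition5:
  fixes V :: "'a set" and E :: "'a set set" and m :: nat
  assumes "simple_graph V E"
    and "V \<noteq> {}"
    and "min_degree V E \<ge> 1"
    and "m \<ge> 1"
    and "real m > real (packing_chromatic_number V E) / real (min_degree V E)"
  shows "packing_chromatic_number (fssd_V m V E) (fssd_E m V E)
       = packing_chromatic_number (fssd_V (m + 1) V E) (fssd_E (m + 1) V E)"
proof -
  note G = assms(1)
  let ?K = "packing_chromatic_number V E" and ?d = "min_degree V E"
  let ?X1 = "packing_chromatic_number (fssd_V m V E) (fssd_E m V E)"
  let ?X2 = "packing_chromatic_number (fssd_V (m + 1) V E) (fssd_E (m + 1) V E)"
  have dpos: "real ?d > 0" using assms(3) by simp
  have "real ?K / real ?d < real m" using assms(5) by linarith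
  then have "real ?K < real m * real ?d" by (subst (asm) pos_divide_less_eq[OF dpos])
  then have "real ?K < real (m * ?d)" by (subst of_nat_mult)
  then have K1: "?K < m * ?d" by (simp only: of_nat_less_iff)
  have "m * ?d \<le> (m + 1) * ?d" by (intro mult_le_mono1) simp
  with K1 have K2: "?K < (m + 1) * ?d" by (rule less_le_trans)
  obtain f1 where f1: "packing_colouring (fssd_V m V E) (fssd_E m V E) ?X1 f1"
      "\<forall>v\<in>V. f1 (Orig v) \<in> {2..?X1}"
    using good_colouring[OF G K1] by blast
  obtain f2 where f2: "packing_colouring (fssd_V (m + 1) V E) (fssd_E (m + 1) V E) ?X2 f2"
      "\<forall>v\<in>V. f2 (Orig v) \<in> {2..?X2}"
    using good_colouring[OF G K2] by blast
  have subV: "fssd_V m V E \<subseteq> fssd_V (m + 1) V E" unfolding fssd_V_def by auto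
  have subE: "fssd_E m V E \<subseteq> fssd_E (m + 1) V E" unfolding fssd_E_def by fastforce
  have "packing_colouring (fssd_V m V E) (fssd_E m V E) ?X2
           (\<lambda>x. case x of Orig v \<Rightarrow> f2 (Orig v) | Sub e i \<Rightarrow> 1)"
  proof (rule transfer[OF f2 assms(2)])
    fix u v xs assume "is_walk (fssd_V m V E) (fssd_E m V E) xs" "hd xs = Orig u" "last xs = Orig v"
    then show "\<exists>ys. is_walk (fssd_V (m + 1) V E) (fssd_E (m + 1) V E) ys \<and> hd ys = Orig u \<and>
        last ys = Orig v \<and> length ys \<le> length xs"
      using walk_mono[OF subV subE] by blast
  qed
  then have le1: "?X1 \<le> ?X2" unfolding packing_chromatic_number_def by (metis Least_le)
  define h :: "'a fssd_vertex \<Rightarrow> 'a fssd_vertex" where "h x = (case x of Orig v \<Rightarrow> Orig v | Sub e i \<Rightarrow> Sub e (if i = m then 0 else i))" for x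
  have hV: "\<And>x. x \<in> fssd_V (m + 1) V E \<Longrightarrow> h x \<in> fssd_V m V E"
  proof -
    fix x assume "x \<in> fssd_V (m + 1) V E"
    then show "h x \<in> fssd_V m V E" using assms(4) unfolding h_def by (cases x) auto
  qed
  have hE: "\<And>x y. {x, y} \<in> fssd_E (m + 1) V E \<Longrightarrow> {h x, h y} \<in> fssd_E m V E"
  proof -
    fix x y assume "{x, y} \<in> fssd_E (m + 1) V E"
    then show "{h x, h y} \<in> fssd_E m V E"
      by (rule fE_cases) (use assms(4) in \<open>auto simp: h_def\<close>)
  qed
  have "packing_colouring (fssd_V (m + 1) V E) (fssd_E (m + 1) V E) ?X1
           (\<lambda>x. case x of Orig v \<Rightarrow> f1 (Orig v) | Sub e i \<Rightarrow> 1)"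
  proof (rule transfer[OF f1 assms(2)])
    fix u v xs assume w: "is_walk (fssd_V (m + 1) V E) (fssd_E (m + 1) V E) xs" "hd xs = Orig u" "last xs = Orig v"
    have ne: "xs \<noteq> []" using walk_nonempty[OF w(1)] .
    have "is_walk (fssd_V m V E) (fssd_E m V E) (map h xs)" using walk_map[OF hV hE w(1)] .
    moreover have "hd (map h xs) = Orig u" using ne w by (simp add: hd_map h_def)
    moreover have "last (map h xs) = Orig v" using ne w by (simp add: last_map h_def)
    ultimately show "\<exists>ys. is_walk (fssd_V m V E) (fssd_E m V E) ys \<and> hd ys = Orig u \<and>
        last ys = Orig v \<and> length ys \<le> length xs" by (intro exI[of _ "map h xs"]) simp
  qed
  then have le2: "?X2 \<le> ?X1" unfolding packing_chromatic_number_def by (metis Least_le)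
  from le1 le2 show ?thesis by simp
qed

end
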